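(* Fix $M\in\mathbb{N}^+$ and consider relative value iteration on the truncated MDP $\Lambda^M$: let $V_0(s)=0$ for all $s\in\{1,\dots,M\}$ and, for $v\ge0$ and $s\in\{1,\dots,M\}$, $$V_{v+1}(s)=\min_{a\in\mathcal{A}}\Big[u(s,a)+Q_aV_v(1)+(1-Q_a)V_v(\min\{s+1,M\})-V_v(1)\Big],$$ and let $\phi^{(v)}(s)$ be any minimizer $a$ of the bracket $u(s,a)+Q_aV_v(1)+(1-Q_a)V_v(\min\{s+1,M\})$ over $a\in\mathcal{A}$. Then for every $v\ge0$ and all states $1\le s_1<s_2\le M$, $Q_{\phi^{(v)}(s_1)}\le Q_{\phi^{(v)}(s_2)}$.
   Context: Fix $N\in\mathbb{N}^+$ vehicle types $\mathcal{N}=\{1,\dots,N\}$ with arrival probabilities $p_n\in(0,1]$, mean operational costs $c_n\ge0$ and mean sensing capabilities $r_n\in(0,1]$. Fix $\beta\in(0,1)$, $\epsilon>0$. Actions: $\mathcal{A}=2^{\mathcal{N}}$. Success probability $Q_\emptyset=0$, $Q_a=1-\prod_{n\in a}(1-r_np_n)$; expected recruitment cost $E_a=\sum_{n\in a}p_nc_n$. Immediate cost at state $\delta\in\mathbb{N}^+$: $u(\delta,a)=(1-\beta)E_a-\beta\epsilon\big(Q_a(\delta^2+2\delta)-(1+\delta)^2\big)$. The truncated MDP $\Lambda^M$ has state space $\{1,\dots,M\}$, action space $\mathcal{A}$, immediate cost $u$, and transitions: from state $s$ under action $a$, go to state $1$ with probability $Q_a$ and to state $\min\{s+1,M\}$ with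 probability $1-Q_a$. *)

theory Defs
  imports Complex_Main
begin

text \<open>Vehicle types are 1..N; an action is a subset of {1..N}.\<close>

definition actions :: "nat \<Rightarrow> nat set set" where
  "actions N = Pow {1..N}"

definition Qa :: "(nat \<Rightarrow> real) \<Rightarrow> (nat \<Rightarrow> real) \<Rightarrow> nat set \<Rightarrow> real" where
  "Qa p r a = (if a = {} then 0 else 1 - (\<Prod>n\<in>a. 1 - r n * p n))"

definition Ea :: "(nat \<Rightarrow> real) \<Rightarrow> (nat \<Rightarrow> real) \<Rightarrow> nat set \<Rightarrow> real" where
  "Ea p c a = (\<Sum>n\<in>a. p n * c n)"

definition ucost :: "(nat \<Rightarrow> real) \<Rightarrow> (nat \<Rightarrow> real) \<Rightarrow> (nat \<Rightarrow> real) \<Rightarrow> real \<Rightarrow> real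
    \<Rightarrow> nat \<Rightarrow> nat set \<Rightarrow> real" where
  "ucost p c r \<beta> \<epsilon> \<delta> a =
     (1 - \<beta>) * Ea p c a
     - \<beta> * \<epsilon> * (Qa p r a * (real \<delta> ^ 2 + 2 * real \<delta>) - (1 + real \<delta>) ^ 2)"

definition rvi_bracket :: "(nat \<Rightarrow> real) \<Rightarrow> (nat \<Rightarrow> real) \<Rightarrow> (nat \<Rightarrow> real) \<Rightarrow> real \<Rightarrow> real
    \<Rightarrow> nat \<Rightarrow> (nat \<Rightarrow> real) \<Rightarrow> nat \<Rightarrow> nat set \<Rightarrow> real" where
  "rvi_bracket p c r \<beta> \<epsilon> M V s a =
     ucost p c r \<beta> \<epsilon> s a + Qa p r a * V 1 + (1 - Qa p r a) * V (min (s + 1) M)"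

fun RVI :: "nat \<Rightarrow> (nat \<Rightarrow> real) \<Rightarrow> (nat \<Rightarrow> real) \<Rightarrow> (nat \<Rightarrow> real) \<Rightarrow> real \<Rightarrow> real
    \<Rightarrow> nat \<Rightarrow> nat \<Rightarrow> nat \<Rightarrow> real" where
  "RVI N p c r \<beta> \<epsilon> M 0 s = 0"
| "RVI N p c r \<beta> \<epsilon> M (Suc v) s =
     (MIN a\<in>actions N. rvi_bracket p c r \<beta> \<epsilon> M (RVI N p c r \<beta> \<epsilon> M v) s a)
     - RVI N p c r \<beta> \<epsilon> M v 1"

end

theory Submission
  imports Defs
begin

lemma Qa_bounds:
  assumes "a \<subseteq> {1..N}"
    and "\<forall>n\<in>{1..N}. 0 < p n \<and> p n \<le> 1"
    and "\<forall>n\<in>{1..N}. 0 < r n \<and> r n \<le> 1"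
  shows "0 \<le> Qa p r a \<and> Qa p r a \<le> 1"
proof -
  have f: "\<forall>n\<in>a. 0 \<le> 1 - r n * p n \<and> 1 - r n * p n \<le> 1"
  proof
    fix n assume "n \<in> a"
    then have "n \<in> {1..N}" using assms(1) by blast
    then have "0 < p n" "p n \<le> 1" "0 < r n" "r n \<le> 1" using assms(2,3) by auto
    moreover have "r n * p n \<le> 1 * 1" using calculation by (intro mult_mono) auto
    moreover have "0 \<le> r n * p n" using calculation by simp
    ultimately show "0 \<le> 1 - r n * p n \<and> 1 - r n * p n \<le> 1" by simp
  qed
  have "0 \<le> (\<Prod>n\<in>a. 1 - r n * p n)" using f by (intro prod_nonneg) auto
  moreover have "(\<Prod>n\<in>a. 1 - r n * p n) \<le> 1" using f by (intro prod_le_1) auto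
  ultimately show ?thesis unfolding Qa_def by auto
qed

lemma bracket_eq:
  "rvi_bracket p c r \<beta> \<epsilon> M V s a = (1-\<beta>)*Ea p c a + \<beta>*\<epsilon>*(1+real s)^2 + V (min (s+1) M)
     + Qa p r a * (V 1 - V (min (s+1) M) - \<beta>*\<epsilon>*(real s^2 + 2*real s))"
  by (simp add: rvi_bracket_def ucost_def algebra_simps)

lemma bracket_mono:
  assumes V: "\<forall>x y. x \<le> y \<longrightarrow> V x \<le> (V y :: real)"
    and Q: "0 \<le> Qa p r a" "Qa p r a \<le> 1"
    and be: "0 < \<beta>" "0 < \<epsilon>"
    and s: "s1 \<le> s2"
  shows "rvi_bracket p c r \<beta> \<epsilon> M V s1 a \<le> rvi_bracket p c r \<beta> \<epsilon> M V s2 a"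
proof -
  have e: "rvi_bracket p c r \<beta> \<epsilon> M V s a = (1-\<beta>)*Ea p c a + \<beta>*\<epsilon>*((1 - Qa p r a)*(real s^2 + 2*real s) + 1)
     + Qa p r a * V 1 + (1 - Qa p r a) * V (min (s+1) M)" for s
    by (simp add: rvi_bracket_def ucost_def algebra_simps power2_eq_square)
  have "V (min (s1+1) M) \<le> V (min (s2+1) M)" using V s by auto
  then have A: "(1 - Qa p r a) * V (min (s1+1) M) \<le> (1 - Qa p r a) * V (min (s2+1) M)"
    using Q by (intro mult_left_mono) auto
  have "real s1^2 + 2*real s1 \<le> real s2^2 + 2*real s2" using s
    by (intro add_mono power_mono) auto
  then have "(1 - Qa p r a)*(real s1^2 + 2*real s1) \<le> (1 - Qa p r a)*(real s2^2 + 2*real s2)"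
    using Q by (intro mult_left_mono) auto
  then have B: "\<beta>*\<epsilon>*((1 - Qa p r a)*(real s1^2 + 2*real s1) + 1) \<le> \<beta>*\<epsilon>*((1 - Qa p r a)*(real s2^2 + 2*real s2) + 1)"
    using be by (intro mult_left_mono) auto
  show ?thesis unfolding e using A B by linarith
qed

lemma actions_fin: "finite (actions N)" "{} \<in> actions N"
  by (auto simp: actions_def)

lemma RVI_mono:
  assumes "\<forall>n\<in>{1..N}. 0 < p n \<and> p n \<le> 1"
    and "\<forall>n\<in>{1..N}. 0 < r n \<and> r n \<le> 1"
    and be: "0 < \<beta>" "0 < \<epsilon>"
  shows "\<forall>x y. x \<le> y \<longrightarrow> RVI N p c r \<beta> \<epsilon> M v x \<le> RVI N p c r \<beta> \<epsilon> M v y"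
proof (induction v)
  case 0
  then show ?case by simp
next
  case (Suc v)
  show ?case
  proof (intro allI impI)
    fix x y :: nat assume xy: "x \<le> y"
    let ?f = "\<lambda>s a. rvi_bracket p c r \<beta> \<epsilon> M (RVI N p c r \<beta> \<epsilon> M v) s a"
    have ne: "?f y ` actions N \<noteq> {}" using actions_fin by auto
    have fin: "finite (?f y ` actions N)" "finite (?f x ` actions N)" using actions_fin by auto
    obtain a where a: "a \<in> actions N" "?f y a = (MIN a\<in>actions N. ?f y a)"
      using Min_in[OF fin(1) ne] by auto
    have "a \<subseteq> {1..N}" using a(1) by (simp add: actions_def)
    then have Q: "0 \<le> Qa p r a" "Qa p r a \<le> 1" using Qa_bounds assms by blast+
    have "(MIN a\<in>actions N. ?f x a) \<le> ?f x a" using fin a(1) by (intro Min_le) auto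
    also have "\<dots> \<le> ?f y a" using bracket_mono[OF Suc Q be xy] .
    finally show "RVI N p c r \<beta> \<epsilon> M (Suc v) x \<le> RVI N p c r \<beta> \<epsilon> M (Suc v) y"
      using a(2) by simp
  qed
qed

theorem lemma3:
  fixes N M :: nat and p c r :: "nat \<Rightarrow> real" and \<beta> \<epsilon> :: real
    and \<phi> :: "nat \<Rightarrow> nat \<Rightarrow> nat set"
  assumes "N \<ge> 1"
    and "\<forall>n\<in>{1..N}. 0 < p n \<and> p n \<le> 1"
    and "\<forall>n\<in>{1..N}. 0 \<le> c n"
    and "\<forall>n\<in>{1..N}. 0 < r n \<and> r n \<le> 1"
    and "0 < \<beta>" and "\<beta> < 1" and "0 < \<epsilon>"
    and "M \<ge> 1"
    and phi_min: "\<forall>v s. 1 \<le> s \<and> s \<le> M \<longrightarrow>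
            \<phi> v s \<in> actions N \<and>
            (\<forall>a\<in>actions N. rvi_bracket p c r \<beta> \<epsilon> M (RVI N p c r \<beta> \<epsilon> M v) s (\<phi> v s)
                            \<le> rvi_bracket p c r \<beta> \<epsilon> M (RVI N p c r \<beta> \<epsilon> M v) s a)"
  shows "\<forall>v s1 s2. 1 \<le> s1 \<and> s1 < s2 \<and> s2 \<le> M \<longrightarrow> Qa p r (\<phi> v s1) \<le> Qa p r (\<phi> v s2)"
proof (intro allI impI)
  fix v s1 s2 assume h: "1 \<le> s1 \<and> s1 < s2 \<and> s2 \<le> M"
  define V where "V = RVI N p c r \<beta> \<epsilon> M v"
  have Vm: "\<forall>x y. x \<le> y \<longrightarrow> V x \<le> V y" unfolding V_def
    using RVI_mono assms(2,4,5,7) by blast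
  define a1 where "a1 = \<phi> v s1"
  define a2 where "a2 = \<phi> v s2"
  have m1: "a1 \<in> actions N" "\<forall>a\<in>actions N. rvi_bracket p c r \<beta> \<epsilon> M V s1 a1 \<le> rvi_bracket p c r \<beta> \<epsilon> M V s1 a"
    using phi_min h unfolding a1_def V_def by auto
  have m2: "a2 \<in> actions N" "\<forall>a\<in>actions N. rvi_bracket p c r \<beta> \<epsilon> M V s2 a2 \<le> rvi_bracket p c r \<beta> \<epsilon> M V s2 a"
    using phi_min h unfolding a2_def V_def by auto
  define g where "g s = V 1 - V (min (s+1) M) - \<beta>*\<epsilon>*(real s^2 + 2*real s)" for s
  define Q1 where "Q1 = Qa p r a1"
  define Q2 where "Q2 = Qa p r a2"
  have i1: "rvi_bracket p c r \<beta> \<epsilon> M V s1 a1 \<le> rvi_bracket p c r \<beta> \<epsilon> M V s1 a2" using m1 m2 by blast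
  have i2: "rvi_bracket p c r \<beta> \<epsilon> M V s2 a2 \<le> rvi_bracket p c r \<beta> \<epsilon> M V s2 a1" using m1 m2 by blast
  have "Q1 * g s1 + Q2 * g s2 \<le> Q2 * g s1 + Q1 * g s2"
    using i1 i2 unfolding bracket_eq g_def[symmetric] Q1_def[symmetric] Q2_def[symmetric] by linarith
  then have P: "(Q1 - Q2) * (g s1 - g s2) \<le> 0" by (simp add: algebra_simps)
  have "V (min (s1+1) M) \<le> V (min (s2+1) M)" using Vm h by auto
  moreover have "real s1^2 + 2*real s1 < real s2^2 + 2*real s2" using h
    by (intro add_less_le_mono power_strict_mono) auto
  then have "\<beta>*\<epsilon>*(real s1^2 + 2*real s1) < \<beta>*\<epsilon>*(real s2^2 + 2*real s2)"
    using assms(5,7) by (intro mult_strict_left_mono) auto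
  ultimately have G: "g s1 > g s2" unfolding g_def by linarith
  show "Qa p r (\<phi> v s1) \<le> Qa p r (\<phi> v s2)"
  proof (rule ccontr)
    assume "\<not> ?thesis"
    then have "Q1 - Q2 > 0" unfolding Q1_def Q2_def a1_def a2_def by simp
    then have "(Q1 - Q2) * (g s1 - g s2) > 0" using G by simp
    then show False using P by simp
  qed
qed

end
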